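(* Let $B$ be an $(n,n-1)$-blocker for a convex $n$-gon $C$ with vertices $0,\dots,n-1$ (indices mod $n$). If the ear-cover $(i-1,i+1)$ does not belong to $B$ and $\deg_B(i)=2$, then $B\setminus\{i\}$ is a minimum-sized blocker (a blocker with exactly $(n-1)-2=n-3$ edges) for the $(n-1)$-gon $C\setminus\{i\}$.
   Context: An edge $(i,j)$ is the segment between vertices $i,j$; boundary edges are $(i,i+1)$, diagonals are the other edges. Two edges cross if they share an interior point. A triangulation is a maximal set of pairwise non-crossing diagonals. A blocker is a set $B$ of diagonals having a diagonal in common with every triangulation; it is saturated if for every $e\in B$, $B\setminus\{e\}$ is not a blocker. An $(n,k)$-blocker is a saturated blocker of size $k$ for a convex $n$-gon. Every blocker of a convex $N$-gon has at least $N-2$ edges; those with exactly $N-2$ are minimum-sized. $(i-1,i+1)$ is the ear-cover covering $i$; $\deg_B(i)$ is the number of edges of $B$ incident to $i$. $C\setminus\{i\}$ is the convex polygon obtained by deleting vertex $i$ (so $(i-1,i+1)$ becomes a side), and $B\setminus\{i\}$ is obtained from $B$ by removing all edges incident to $i$ and the edge $(i-1,i+1)$. *)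

theory Defs
  imports Main
begin

text \<open>A convex polygon is represented combinatorially by a finite set V of natural
numbers (its vertices), listed in cyclic order by the natural order of nat.
The convex n-gon is {0..<n}; deleting vertex i gives {0..<n} - {i}.
An edge is an unordered pair of distinct vertices.\<close>

definition boundary_edge :: "nat set \<Rightarrow> nat set \<Rightarrow> bool" where
  "boundary_edge V e \<longleftrightarrow> (\<exists>a b. e = {a, b} \<and> a < b \<and> a \<in> V \<and> b \<in> V \<and>
      ((\<not> (\<exists>x\<in>V. a < x \<and> x < b)) \<or> (\<not> (\<exists>x\<in>V. x < a \<or> b < x))))"

definition diagonal :: "nat set \<Rightarrow> nat set \<Rightarrow> bool" where
  "diagonal V e \<longleftrightarrow> (\<exists>a b. e = {a, b} \<and> a \<noteq> b \<and> a \<in> V \<and> b \<in> V) \<and> \<not> boundary_edge V e"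

text \<open>For vertices in convex position, two edges share an interior point iff their
endpoints strictly interleave in the cyclic order.\<close>
definition crosses :: "nat set \<Rightarrow> nat set \<Rightarrow> bool" where
  "crosses e f \<longleftrightarrow> (\<exists>a b c d. ((e = {a, b} \<and> f = {c, d}) \<or> (e = {c, d} \<and> f = {a, b}))
      \<and> a < c \<and> c < b \<and> b < d)"

definition triangulation :: "nat set \<Rightarrow> nat set set \<Rightarrow> bool" where
  "triangulation V T \<longleftrightarrow>
     (\<forall>e\<in>T. diagonal V e) \<and> (\<forall>e\<in>T. \<forall>f\<in>T. \<not> crosses e f) \<and>
     (\<forall>d. diagonal V d \<and> d \<notin> T \<longrightarrow> (\<exists>e\<in>T. crosses d e))"

definition blocker :: "nat set \<Rightarrow> nat set set \<Rightarrow> bool" where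
  "blocker V B \<longleftrightarrow> (\<forall>e\<in>B. diagonal V e) \<and> (\<forall>T. triangulation V T \<longrightarrow> B \<inter> T \<noteq> {})"

definition saturated_blocker :: "nat set \<Rightarrow> nat set set \<Rightarrow> bool" where
  "saturated_blocker V B \<longleftrightarrow> blocker V B \<and> (\<forall>e\<in>B. \<not> blocker V (B - {e}))"

definition nk_blocker :: "nat \<Rightarrow> nat \<Rightarrow> nat set set \<Rightarrow> bool" where
  "nk_blocker n k B \<longleftrightarrow> saturated_blocker {0..<n} B \<and> card B = k"

definition minimum_sized_blocker :: "nat set \<Rightarrow> nat set set \<Rightarrow> bool" where
  "minimum_sized_blocker V B \<longleftrightarrow> blocker V B \<and> card B = card V - 2"

definition deg :: "nat set set \<Rightarrow> nat \<Rightarrow> nat" where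
  "deg B i = card {e \<in> B. i \<in> e}"

definition ear_cover :: "nat \<Rightarrow> nat \<Rightarrow> nat set" where
  "ear_cover n i = {(i + n - 1) mod n, (i + 1) mod n}"

definition delete_vertex_blocker :: "nat \<Rightarrow> nat set set \<Rightarrow> nat \<Rightarrow> nat set set" where
  "delete_vertex_blocker n B i = {e \<in> B. i \<notin> e} - {ear_cover n i}"

end

theory Submission imports Defs begin

lemma bI_in: "a < b \<Longrightarrow> a \<in> V \<Longrightarrow> b \<in> V \<Longrightarrow> (\<And>x. x \<in> V \<Longrightarrow> \<not> (a < x \<and> x < b)) \<Longrightarrow> boundary_edge V {a,b}"
  unfolding boundary_edge_def by blast
lemma bI_out: "a < b \<Longrightarrow> a \<in> V \<Longrightarrow> b \<in> V \<Longrightarrow> (\<And>x. x \<in> V \<Longrightarrow> a \<le> x \<and> x \<le> b) \<Longrightarrow> boundary_edge V {a,b}"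
  unfolding boundary_edge_def by (metis leD)

lemma bnd_iff:
  assumes "a < b" "b < n"
  shows "boundary_edge {0..<n} {a,b} \<longleftrightarrow> (b = Suc a \<or> (a = 0 \<and> b = n - 1))"
proof
  assume "boundary_edge {0..<n} {a,b}"
  then obtain a' b' where h: "{a,b} = {a',b'}" "a' < b'"
    "(\<not> (\<exists>x\<in>{0..<n}. a' < x \<and> x < b')) \<or> (\<not> (\<exists>x\<in>{0..<n}. x < a' \<or> b' < x))"
    unfolding boundary_edge_def by blast
  have "a' = a" "b' = b" using h(1,2) assms(1) by (auto simp: doubleton_eq_iff)
  note h3 = h(3)[unfolded this]
  show "b = Suc a \<or> (a = 0 \<and> b = n - 1)"
  proof (rule ccontr)
    assume nb: "\<not> (b = Suc a \<or> (a = 0 \<and> b = n - 1))"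
    show False
    proof (cases "b = Suc a")
      case True then show False using nb by blast
    next
      case False
      then have "Suc a \<in> {0..<n}" "a < Suc a" "Suc a < b" using assms by auto
      then have in1: "\<exists>x\<in>{0..<n}. a < x \<and> x < b" by blast
      have "(0 < a \<and> 0 \<in> {0..<n}) \<or> (b < n - 1 \<and> n - 1 \<in> {0..<n})" using nb assms by auto
      then have "\<exists>x\<in>{0..<n}. x < a \<or> b < x" by blast
      then show False using in1 h3 by blast
    qed
  qed
next
  assume "b = Suc a \<or> (a = 0 \<and> b = n - 1)"
  then show "boundary_edge {0..<n} {a,b}"
  proof
    assume "b = Suc a" then show ?thesis by (intro bI_in) (use assms in auto)
  next
    assume "a = 0 \<and> b = n - 1" then show ?thesis by (intro bI_out) (use assms in auto)
  qed
qed

lemma ear0: "2 \<le> n \<Longrightarrow> ear_cover n 0 = {n - 1, 1}"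
  unfolding ear_cover_def by auto
lemma earmid: assumes "0 < i" "i < n - 1" shows "ear_cover n i = {i - 1, i + 1}"
proof -
  have e: "i + n - 1 = (i - 1) + n" using assms by arith
  have "(i + n - 1) mod n = ((i - 1) + n) mod n" by (simp only: e)
  also have "\<dots> = (i - 1) mod n" by (rule mod_add_self2)
  also have "\<dots> = i - 1" using assms by simp
  finally have "(i + n - 1) mod n = i - 1" .
  moreover have "(i + 1) mod n = i + 1" using assms by simp
  ultimately show ?thesis unfolding ear_cover_def by simp
qed
lemma earlast: assumes "2 \<le> n" shows "ear_cover n (n - 1) = {n - 2, 0}"
proof -
  have "n - 1 + n - 1 = (n - 2) + n" using assms by arith
  then have "(n - 1 + n - 1) mod n = ((n - 2) + n) mod n" by (simp only:)
  also have "\<dots> = (n - 2) mod n" by (rule mod_add_self2)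
  also have "\<dots> = n - 2" using assms by simp
  finally have "(n - 1 + n - 1) mod n = n - 2" .
  moreover have "(n - 1 + 1) mod n = 0" using assms by simp
  ultimately show ?thesis unfolding ear_cover_def by simp
qed

lemma mono_bnd:
  assumes "boundary_edge V e" "e \<subseteq> W" "W \<subseteq> V"
  shows "boundary_edge W e"
  using assms unfolding boundary_edge_def by blast

lemma diag_mono:
  assumes "diagonal W e" "W \<subseteq> V"
  shows "diagonal V e"
  using assms mono_bnd unfolding diagonal_def by blast

lemma bnd_nocross:
  assumes "boundary_edge V e" "f \<subseteq> V"
  shows "\<not> crosses e f"
proof
  assume "crosses e f"
  then obtain a b c d where c: "(e = {a, b} \<and> f = {c, d}) \<or> (e = {c, d} \<and> f = {a, b})"
      "a < c" "c < b" "b < d" unfolding crosses_def by blast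
  obtain a' b' where h: "e = {a',b'}" "a' < b'" "a' \<in> V" "b' \<in> V"
    "(\<not> (\<exists>x\<in>V. a' < x \<and> x < b')) \<or> (\<not> (\<exists>x\<in>V. x < a' \<or> b' < x))"
    using assms(1) unfolding boundary_edge_def by blast
  have ab: "a < b" "c < d" using c(2-4) by linarith+
  from c(1) show False
  proof (elim disjE conjE)
    assume e: "e = {a,b}" and f: "f = {c,d}"
    have "a' = a \<and> b' = b" using h(1,2) e ab by (auto simp: doubleton_eq_iff)
    moreover have "c \<in> V" "d \<in> V" using f assms(2) by auto
    ultimately show False using h(5) c(2-4) by blast
  next
    assume e: "e = {c,d}" and f: "f = {a,b}"
    have "a' = c \<and> b' = d" using h(1,2) e ab by (auto simp: doubleton_eq_iff)
    moreover have "a \<in> V" "b \<in> V" using f assms(2) by auto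
    ultimately show False using h(5) c(2-4) by blast
  qed
qed

lemma diag_char:
  assumes "diagonal {0..<n} e"
  shows "\<exists>a b. e = {a,b} \<and> a < b \<and> b < n \<and> b \<noteq> Suc a \<and> \<not> (a = 0 \<and> b = n - 1)"
proof -
  obtain a b where h: "e = {a,b}" "a \<noteq> b" "a < n" "b < n" "\<not> boundary_edge {0..<n} e"
    using assms unfolding diagonal_def by auto
  show ?thesis
  proof (cases "a < b")
    case True
    have "\<not> (b = Suc a \<or> (a = 0 \<and> b = n - 1))" using bnd_iff[of a b n] True h(4,5) h(1) by simp
    then show ?thesis using h(1,4) True by blast
  next
    case False
    then have ba: "b < a" using h(2) by linarith
    have e': "e = {b,a}" using h(1) by blast
    have "\<not> (a = Suc b \<or> (b = 0 \<and> a = n - 1))" using bnd_iff[of b a n] ba h(3,5) e' by simp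
    then show ?thesis using e' h(3) ba by blast
  qed
qed

lemma K:
  assumes "i < n" "a < b" "b < n" "a \<noteq> i" "b \<noteq> i" "b \<noteq> Suc a" "\<not> (a = 0 \<and> b = n - 1)"
    "boundary_edge ({0..<n} - {i}) {a,b}"
  shows "{a,b} = ear_cover n i"
proof -
  obtain a' b' where h: "{a,b} = {a',b'}" "a' < b'"
    "(\<not> (\<exists>x\<in>{0..<n} - {i}. a' < x \<and> x < b')) \<or> (\<not> (\<exists>x\<in>{0..<n} - {i}. x < a' \<or> b' < x))"
    using assms(8) unfolding boundary_edge_def by blast
  have "a' = a" "b' = b" using h(1,2) assms(2) by (auto simp: doubleton_eq_iff)
  note h = h[unfolded this]
  have W: "\<And>x. x < n \<Longrightarrow> x \<noteq> i \<Longrightarrow> x \<in> {0..<n} - {i}" by simp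
  show ?thesis
  proof (cases "\<not> (\<exists>x\<in>{0..<n} - {i}. a < x \<and> x < b)")
    case True
    have sab: "Suc a < b" using assms(2,6) by linarith
    have i: "i = Suc a"
    proof (rule ccontr)
      assume "i \<noteq> Suc a"
      then have "Suc a \<in> {0..<n} - {i}" using  sab assms(3) by auto
      then show False using True sab by (meson lessI)
    qed
    have "b = Suc (Suc a)"
    proof (rule ccontr)
      assume "b \<noteq> Suc (Suc a)"
      then have "Suc (Suc a) < b" using sab by linarith
      moreover have "Suc (Suc a) \<in> {0..<n} - {i}" using i  assms(3) calculation by auto
      moreover have "a < Suc (Suc a)" by simp
      ultimately show False using True by blast
    qed
    moreover have "0 < i" "i < n - 1" using i calculation assms(3) by linarith+
    ultimately show ?thesis using earmid[of i n] i by simp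
  next
    case False
    then have out: "\<not> (\<exists>x\<in>{0..<n} - {i}. x < a \<or> b < x)" using h(3) by blast
    show ?thesis
    proof (cases "a = 0")
      case True
      then have bn: "b < n - 1" using assms(3,7) by linarith
      have i: "i = n - 1"
      proof (rule ccontr)
        assume "i \<noteq> n - 1"
        then have "n - 1 \<in> {0..<n} - {i}" using  bn by auto
        then show False using out bn by blast
      qed
      have "b = n - 2"
      proof (rule ccontr)
        assume "b \<noteq> n - 2"
        then have "b < n - 2" using bn by linarith
        moreover have "n - 2 \<in> {0..<n} - {i}" using  i calculation by auto
        ultimately show False using out by blast
      qed
      moreover have "2 \<le> n" using bn assms(2) True by linarith
      ultimately show ?thesis using earlast[of n] i True by (simp add: insert_commute)
    next
      case False
      have i: "i = 0"
      proof (rule ccontr)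
        assume "i \<noteq> 0"
        then have "0 \<in> {0..<n} - {i}" using  assms(3) by auto
        moreover have "0 < a" using False by simp
        ultimately show False using out by blast
      qed
      have a1: "a = 1"
      proof (rule ccontr)
        assume "a \<noteq> 1"
        then have "1 < a" using False by linarith
        moreover have "1 \<in> {0..<n} - {i}" using  i calculation assms(2,3) by auto
        ultimately show False using out by blast
      qed
      have "b = n - 1"
      proof (rule ccontr)
        assume "b \<noteq> n - 1"
        then have "b < n - 1" using assms(3) by linarith
        moreover have "n - 1 \<in> {0..<n} - {i}" using  i calculation assms(2) by auto
        ultimately show False using out by blast
      qed
      moreover have "2 \<le> n" using a1 calculation assms(2) by linarith
      ultimately show ?thesis using ear0[of n] i a1 by (simp add: insert_commute)
    qed
  qed
qed

lemma E_bnd: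
  assumes "3 \<le> n" "i < n"
  shows "boundary_edge ({0..<n} - {i}) (ear_cover n i)"
proof -
  consider "i = 0" | "i = n - 1" | "0 < i \<and> i < n - 1" using assms by linarith
  then show ?thesis
  proof cases
    case 1
    have "boundary_edge ({0..<n} - {i}) {1, n - 1}"
      by (rule bI_out) (use assms 1 in auto)
    then show ?thesis using ear0[of n] 1 assms by (simp add: insert_commute)
  next
    case 2
    have "boundary_edge ({0..<n} - {i}) {0, n - 2}"
      by (rule bI_out) (use assms 2 in auto)
    then show ?thesis using earlast[of n] 2 assms by (simp add: insert_commute)
  next
    case 3
    have "boundary_edge ({0..<n} - {i}) {i - 1, i + 1}"
      by (rule bI_in) (use assms 3 in auto)
    then show ?thesis using earmid[of i n] 3 by simp
  qed
qed

lemma mk_diag: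
  assumes "a < b" "b < n" "b \<noteq> Suc a" "\<not> (a = 0 \<and> b = n - 1)"
  shows "diagonal {0..<n} {a,b}"
proof -
  have "\<not> boundary_edge {0..<n} {a,b}" using assms bnd_iff[of a b n] by auto
  moreover have "\<exists>a' b'. {a,b} = {a',b'} \<and> a' \<noteq> b' \<and> a' \<in> {0..<n} \<and> b' \<in> {0..<n}"
    using assms by (intro exI[of _ a] exI[of _ b]) auto
  ultimately show ?thesis unfolding diagonal_def by blast
qed

lemma E_diag:
  assumes "5 \<le> n" "i < n"
  shows "diagonal {0..<n} (ear_cover n i)"
proof -
  consider "i = 0" | "i = n - 1" | "0 < i \<and> i < n - 1" using assms by linarith
  then show ?thesis
  proof cases
    case 1
    have "diagonal {0..<n} {1, n - 1}" by (rule mk_diag) (use assms in linarith)+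
    then show ?thesis using ear0[of n] 1 assms by (simp add: insert_commute)
  next
    case 2
    have "diagonal {0..<n} {0, n - 2}" by (rule mk_diag) (use assms in linarith)+
    then show ?thesis using earlast[of n] 2 assms by (simp add: insert_commute)
  next
    case 3
    moreover have "i - 1 < i + 1" "i + 1 < n" "i + 1 \<noteq> Suc (i - 1)" "\<not> (i - 1 = 0 \<and> i + 1 = n - 1)"
      using 3 assms by linarith+
    ultimately show ?thesis using earmid[of i n] mk_diag[of "i - 1" "i + 1" n]
      by simp
  qed
qed

lemma crI1: "a < c \<Longrightarrow> c < b \<Longrightarrow> b < d \<Longrightarrow> crosses {a,b} {c,d}"
  unfolding crosses_def by blast
lemma crI2: "a < c \<Longrightarrow> c < b \<Longrightarrow> b < d \<Longrightarrow> crosses {c,d} {a,b}"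
  unfolding crosses_def by blast

lemma ear_cross:
  assumes "5 \<le> n" "i < n" "a < b" "b < n" "b \<noteq> Suc a" "\<not> (a = 0 \<and> b = n - 1)"
    "i \<in> {a,b}"
  shows "crosses {a,b} (ear_cover n i)"
proof -
  have iab: "i = a \<or> i = b" using assms(7) by blast
  consider "i = 0" | "i = n - 1" | "0 < i \<and> i < n - 1" using assms by linarith
  then show ?thesis
  proof cases
    case 1
    then have "a = 0" "1 < b" "b < n - 1" using assms(3-6) iab by linarith+
    then have "crosses {a,b} {1, n - 1}" using crI1[of 0 1 b "n - 1"] by simp
    then show ?thesis using 1 ear0[of n] assms(1) by (simp add: insert_commute)
  next
    case 2
    then have "b = n - 1" "0 < a" "a < n - 2" using assms(3-6) iab by linarith+
    then have "crosses {a,b} {0, n - 2}" using crI2[of 0 a "n - 2" "n - 1"] by simp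
    then show ?thesis using 2 earlast[of n] assms(1) by (simp add: insert_commute)
  next
    case 3
    show ?thesis
    proof (cases "i = a")
      case True
      then have "i + 1 < b" "i - 1 < i" using assms(3,5) 3 by linarith+
      then have "crosses {a,b} {i - 1, i + 1}" using True crI2[of "i - 1" i "i + 1" b] by simp
      then show ?thesis using 3 earmid[of i n] by simp
    next
      case False
      then have "i = b" "a < i - 1" "i - 1 < i" using assms(3,5) 3 iab by linarith+
      then have "crosses {a,b} {i - 1, i + 1}" using crI1[of a "i - 1" i "i + 1"] by simp
      then show ?thesis using 3 earmid[of i n] by simp
    qed
  qed
qed

lemma small_diag:
  assumes "n \<le> 4" "diagonal {0..<n} e"
  shows "e = {0,2} \<or> e = {1,3}"
proof -
  obtain a b where h: "e = {a,b}" "a < b" "b < n" "b \<noteq> Suc a" "\<not> (a = 0 \<and> b = n - 1)"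
    using diag_char[OF assms(2)] by blast
  have "(a = 0 \<and> b = 2) \<or> (a = 1 \<and> b = 3)" using h(2-5) assms(1) by arith
  then show ?thesis using h(1) by auto
qed


lemma cross_sym: "crosses e f = crosses f e"
  unfolding crosses_def by blast

lemma bnd_sub: "boundary_edge V e \<Longrightarrow> e \<subseteq> V"
  unfolding boundary_edge_def by blast

lemma diag_sub: "diagonal V e \<Longrightarrow> e \<subseteq> V"
  unfolding diagonal_def by blast

lemma diag_not_bnd: "diagonal V e \<Longrightarrow> \<not> boundary_edge V e"
  unfolding diagonal_def by blast

lemma diagW:
  assumes "i < n" "diagonal {0..<n} e" "i \<notin> e" "e \<noteq> ear_cover n i"
  shows "diagonal ({0..<n} - {i}) e"
proof -
  obtain a b where h: "e = {a,b}" "a < b" "b < n" "b \<noteq> Suc a" "\<not> (a = 0 \<and> b = n - 1)"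
    using diag_char[OF assms(2)] by blast
  have ai: "a \<noteq> i" "b \<noteq> i" using assms(3) h(1) by auto
  have nb: "\<not> boundary_edge ({0..<n} - {i}) {a,b}"
  proof
    assume "boundary_edge ({0..<n} - {i}) {a,b}"
    then have "{a,b} = ear_cover n i" using K[OF assms(1) h(2,3) ai h(4,5)] by blast
    then show False using assms(4) h(1) by simp
  qed
  have nb': "\<not> boundary_edge ({0..<n} - {i}) e" using nb h(1) by simp
  have "\<exists>a' b'. e = {a',b'} \<and> a' \<noteq> b' \<and> a' \<in> {0..<n} - {i} \<and> b' \<in> {0..<n} - {i}"
    using h ai by (intro exI[of _ a] exI[of _ b]) auto
  then show ?thesis unfolding diagonal_def using nb' by blast
qed

theorem mainTheorem12:
  fixes n i :: nat and B :: "nat set set"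
  assumes "nk_blocker n (n - 1) B"
    and "i < n"
    and "ear_cover n i \<notin> B"
    and "deg B i = 2"
  shows "minimum_sized_blocker ({0..<n} - {i}) (delete_vertex_blocker n B i)"
proof -
  define V where "V = {0..<n}"
  define W where "W = {0..<n} - {i}"
  define E where "E = ear_cover n i"
  have blk: "blocker V B" and cB: "card B = n - 1"
    using assms(1) unfolding nk_blocker_def saturated_blocker_def V_def by auto
  have diagB: "\<And>e. e \<in> B \<Longrightarrow> diagonal V e" and hit: "\<And>T. triangulation V T \<Longrightarrow> B \<inter> T \<noteq> {}"
    using blk unfolding blocker_def by auto
  have c2: "card {e \<in> B. i \<in> e} = 2" using assms(4) unfolding deg_def .
  have n5: "5 \<le> n"
  proof (rule ccontr)
    assume "\<not> 5 \<le> n"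
    then have n4: "n \<le> 4" by simp
    obtain x y where xy: "{e \<in> B. i \<in> e} = {x,y}" "x \<noteq> y" using c2 card_2_iff by metis
    have "x \<in> B" "i \<in> x" "y \<in> B" "i \<in> y" using xy(1) by blast+
    then have "(x = {0,2} \<or> x = {1,3}) \<and> (y = {0,2} \<or> y = {1,3})"
      using small_diag[OF n4] diagB V_def by blast
    then show False using xy(2) \<open>i \<in> x\<close> \<open>i \<in> y\<close> by auto
  qed
  have "0 < card B" using cB n5 by simp
  then have finB: "finite B" using card_gt_0_iff by blast
  have B': "delete_vertex_blocker n B i = B - {e \<in> B. i \<in> e}"
    using assms(3) unfolding delete_vertex_blocker_def by blast
  have cardB': "card (delete_vertex_blocker n B i) = n - 3"
    unfolding B' using finB c2 cB by (subst card_Diff_subset) auto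
  have cardW: "card W = n - 1" unfolding W_def using assms(2) by simp
  have Ebnd: "boundary_edge W E" unfolding W_def E_def using E_bnd n5 assms(2) by simp
  have Ediag: "diagonal V E" unfolding V_def E_def using E_diag n5 assms(2) by simp
  have EW: "E \<subseteq> W" using bnd_sub[OF Ebnd] .
  have WV: "W \<subseteq> V" unfolding W_def V_def by blast
  have diagB': "\<forall>e\<in>delete_vertex_blocker n B i. diagonal W e"
  proof
    fix e assume "e \<in> delete_vertex_blocker n B i"
    then have "e \<in> B" "i \<notin> e" "e \<noteq> E" using assms(3) unfolding B' E_def by auto
    then show "diagonal W e" using diagW[OF assms(2)] diagB unfolding V_def W_def E_def by blast
  qed
  have hitB': "delete_vertex_blocker n B i \<inter> T' \<noteq> {}" if tri: "triangulation W T'" for T'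
  proof -
    have T1: "\<And>e. e \<in> T' \<Longrightarrow> diagonal W e" and T2: "\<And>e f. e \<in> T' \<Longrightarrow> f \<in> T' \<Longrightarrow> \<not> crosses e f"
      and T3: "\<And>d. diagonal W d \<Longrightarrow> d \<notin> T' \<Longrightarrow> \<exists>e\<in>T'. crosses d e"
      using tri unfolding triangulation_def by auto
    define T where "T = insert E T'"
    have "triangulation V T"
      unfolding triangulation_def
    proof (intro conjI ballI allI impI)
      fix e assume "e \<in> T"
      then show "diagonal V e" unfolding T_def using Ediag T1 diag_mono[OF _ WV] by blast
    next
      fix e f assume ef: "e \<in> T" "f \<in> T"
      have nc: "\<not> crosses E g" if "g \<in> T" for g
      proof -
        have "g \<subseteq> W" using that EW T1 diag_sub unfolding T_def by blast
        then show ?thesis using bnd_nocross[OF Ebnd] by blast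
      qed
      show "\<not> crosses e f"
      proof (cases "e = E")
        case True then show ?thesis using nc ef by blast
      next
        case False
        show ?thesis
        proof (cases "f = E")
          case True then show ?thesis using nc ef cross_sym by blast
        next
          case False
          then show ?thesis using \<open>e \<noteq> E\<close> ef T2 unfolding T_def by blast
        qed
      qed
    next
      fix d assume d: "diagonal V d \<and> d \<notin> T"
      obtain a b where h: "d = {a,b}" "a < b" "b < n" "b \<noteq> Suc a" "\<not> (a = 0 \<and> b = n - 1)"
        using diag_char[of n d] d V_def by blast
      show "\<exists>e\<in>T. crosses d e"
      proof (cases "i \<in> d")
        case True
        then have "crosses d E" using ear_cross[OF n5 assms(2) h(2-5)] h(1) E_def by blast
        then show ?thesis unfolding T_def by blast
      next
        case False
        have "d \<noteq> E" "d \<notin> T'" using d unfolding T_def by auto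
        then have "diagonal W d" using diagW[OF assms(2), of d] d False unfolding V_def W_def E_def by blast
        then show ?thesis using T3 \<open>d \<notin> T'\<close> unfolding T_def by blast
      qed
    qed
    then obtain e where e: "e \<in> B" "e \<in> T" using hit by blast
    then have "e \<noteq> E" using assms(3) E_def by blast
    then have "e \<in> T'" using e(2) T_def by blast
    then have "diagonal W e" using T1 by blast
    then have "i \<notin> e" using diag_sub W_def by blast
    then have "e \<in> delete_vertex_blocker n B i" unfolding B' using e(1) by blast
    then show ?thesis using \<open>e \<in> T'\<close> by blast
  qed
  show ?thesis
    unfolding minimum_sized_blocker_def blocker_def
    using diagB' hitB' cardB' cardW W_def by auto
qed

end
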